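(* Let $S=\langle P,\varphi\rangle$ be a SUT model, $t$ a strength, $N\ge1$ an integer and $lb$ an integer with $0\le lb<CAN(t,S)$. Consider the Weighted Partial MaxSAT instance $WPMSat_{CCX}^{N,t,S,lb}$ (defined in the context) with weights $w_i$. (1) If $w_i=2^{i-(lb+2)}$ for all $i$: when $N\ge CAN(t,S)$ its optimal cost is $2^{CAN(t,S)-(lb+1)}-1$, and otherwise it is $\infty$. (2) If $w_i=i-(lb+2)+1$ for all $i$: when $N\ge CAN(t,S)$ its optimal cost is $(1+n)\cdot n/2$ where $n=CAN(t,S)-(lb+1)$, and otherwise it is $\infty$.
   Context: A SUT model is $S=\langle P,\varphi\rangle$, where $P$ is a finite set of parameters, each $p\in P$ having a finite nonempty domain $d(p)$, and $\varphi$ is a propositional formula whose atoms have the form $(p=v)$ with $p\in P$, $v\in d(p)$. A test case is a full assignment $A$ giving each $p$ a value in $d(p)$ such that $\varphi$ is true when each atom $(p=v)$ is read as true iff $A(p)=v$; it is assumed that at least one test case exists. Fix a strength $t$ with $1\le t\le|P|$. A $t$-tuple is an assignment of values to exactly $t$ distinct parameters, viewed as a set of pairs $(p,v)$; a test case covers $\tau$ if it assigns $v$ to $p$ for every $(p,v)\in\tau$. A $t$-tuple is allowed if some test case covers it; $\mathcal T_a$ is the set of allowed $t$-tuples. A covering array $CA(N;t,S)$ is a list of $N$ test cases (repetitions allowed) covering every allowed $t$-tuple; $CAN(t,S)$ is the minimum $N$ for which a $CA(N;t,S)$ exists. $[N]=\{1,\dots,N\}$. A Weighted Partial MaxSAT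 instance consists of hard constraints and soft clauses $(c,w)$ with positive integer weight $w$; its optimal cost is the minimum, over truth assignments satisfying all hard constraints, of the total weight of falsified soft clauses, and $\infty$ if the hard constraints are unsatisfiable. Variables: $x_{i,p,v}$ ($i\in[N]$, $p\in P$, $v\in d(p)$), $c^i_\tau$ ($i\in\{0,\dots,N\}$, $\tau\in\mathcal T_a$), $u_i$ ($i\in\{lb+2,\dots,N\}$). Hard constraints of $WPMSat_{CCX}^{N,t,S,lb}$: (X) for every $i\in[N]$, $p\in P$: exactly one of $\{x_{i,p,v}:v\in d(p)\}$ is true; (SUTX) for every $i\in[N]$: the formula obtained from $\varphi$ by replacing each atom $(p=v)$ with $x_{i,p,v}$; (CCX) (a) for every $i\in[N]$, $\tau\in\mathcal T_a$, $(p,v)\in\tau$: $c^i_\tau\rightarrow(c^{i-1}_\tau\vee x_{i,p,v})$; (b) for every $\tau\in\mathcal T_a$: the unit clause $c^N_\tau$; (c) for every $\tau\in\mathcal T_a$: $c^N_\tau\rightarrow\neg c^0_\tau$; (BSU) for every $i\in\{lb+2,\dots,N-1\}$: $u_{i+1}\rightarrow u_i$; (CCU) for every $i\in\{lb+2,\dots,N\}$, $\tau\in\mathcal T_a$: $\neg c^{i-1}_\tau\rightarrow u_i$. Soft clauses: $(\neg u_i,w_i)$ for every $i\in\{lb+2,\dots,N\}$. *)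

theory Defs
  imports Main "HOL-Library.Extended_Nat"
begin

datatype 'a pform =
    PAtom 'a
  | PTrue
  | PFalse
  | PNot "'a pform"
  | PAnd "'a pform" "'a pform"
  | POr "'a pform" "'a pform"
  | PImp "'a pform" "'a pform"
  | PIff "'a pform" "'a pform"

fun peval :: "('a \<Rightarrow> bool) \<Rightarrow> 'a pform \<Rightarrow> bool" where
  "peval I (PAtom a) = I a"
| "peval I PTrue = True"
| "peval I PFalse = False"
| "peval I (PNot f) = (\<not> peval I f)"
| "peval I (PAnd f g) = (peval I f \<and> peval I g)"
| "peval I (POr f g) = (peval I f \<or> peval I g)"
| "peval I (PImp f g) = (peval I f \<longrightarrow> peval I g)"
| "peval I (PIff f g) = (peval I f \<longleftrightarrow> peval I g)"

fun patoms :: "'a pform \<Rightarrow> 'a set" where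
  "patoms (PAtom a) = {a}"
| "patoms PTrue = {}"
| "patoms PFalse = {}"
| "patoms (PNot f) = patoms f"
| "patoms (PAnd f g) = patoms f \<union> patoms g"
| "patoms (POr f g) = patoms f \<union> patoms g"
| "patoms (PImp f g) = patoms f \<union> patoms g"
| "patoms (PIff f g) = patoms f \<union> patoms g"

text \<open>A SUT model is given by a parameter set P, domains d and a constraint phi
  whose atoms are pairs (p,v), read as the atom (p = v).\<close>

definition sut_model :: "'p set \<Rightarrow> ('p \<Rightarrow> 'v set) \<Rightarrow> ('p \<times> 'v) pform \<Rightarrow> bool" where
  "sut_model P d phi \<longleftrightarrow> finite P \<and> (\<forall>p\<in>P. finite (d p) \<and> d p \<noteq> {})
     \<and> patoms phi \<subseteq> Sigma P d"

definition test_case :: "'p set \<Rightarrow> ('p \<Rightarrow> 'v set) \<Rightarrow> ('p \<times> 'v) pform \<Rightarrow> ('p \<Rightarrow> 'v) \<Rightarrow> bool" where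
  "test_case P d phi A \<longleftrightarrow> (\<forall>p\<in>P. A p \<in> d p) \<and> peval (\<lambda>(p, v). A p = v) phi"

definition t_tuple :: "'p set \<Rightarrow> ('p \<Rightarrow> 'v set) \<Rightarrow> nat \<Rightarrow> ('p \<times> 'v) set \<Rightarrow> bool" where
  "t_tuple P d t tau \<longleftrightarrow> tau \<subseteq> Sigma P d \<and> finite tau \<and> inj_on fst tau \<and> card tau = t"

definition covers :: "('p \<Rightarrow> 'v) \<Rightarrow> ('p \<times> 'v) set \<Rightarrow> bool" where
  "covers A tau \<longleftrightarrow> (\<forall>(p, v)\<in>tau. A p = v)"

definition allowed_tuples :: "'p set \<Rightarrow> ('p \<Rightarrow> 'v set) \<Rightarrow> ('p \<times> 'v) pform \<Rightarrow> nat \<Rightarrow> ('p \<times> 'v) set set" where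
  "allowed_tuples P d phi t = {tau. t_tuple P d t tau \<and> (\<exists>A. test_case P d phi A \<and> covers A tau)}"

definition covering_array :: "'p set \<Rightarrow> ('p \<Rightarrow> 'v set) \<Rightarrow> ('p \<times> 'v) pform \<Rightarrow> nat \<Rightarrow> nat \<Rightarrow> ('p \<Rightarrow> 'v) list \<Rightarrow> bool" where
  "covering_array P d phi t N xs \<longleftrightarrow> length xs = N \<and> (\<forall>A\<in>set xs. test_case P d phi A)
     \<and> (\<forall>tau\<in>allowed_tuples P d phi t. \<exists>A\<in>set xs. covers A tau)"

definition CAN :: "'p set \<Rightarrow> ('p \<Rightarrow> 'v set) \<Rightarrow> ('p \<times> 'v) pform \<Rightarrow> nat \<Rightarrow> nat" where
  "CAN P d phi t = (LEAST N. \<exists>xs. covering_array P d phi t N xs)"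

datatype ('p, 'v) wvar =
    X nat 'p 'v
  | C nat "('p \<times> 'v) set"
  | U nat

definition wpms_hard :: "'p set \<Rightarrow> ('p \<Rightarrow> 'v set) \<Rightarrow> ('p \<times> 'v) pform \<Rightarrow> nat \<Rightarrow> nat \<Rightarrow> nat
    \<Rightarrow> (('p, 'v) wvar \<Rightarrow> bool) \<Rightarrow> bool" where
  "wpms_hard P d phi N t lb \<alpha> \<longleftrightarrow>
     \<comment> \<open>(X)\<close>
     (\<forall>i\<in>{1..N}. \<forall>p\<in>P. \<exists>!v. v \<in> d p \<and> \<alpha> (X i p v)) \<and>
     \<comment> \<open>(SUTX)\<close>
     (\<forall>i\<in>{1..N}. peval (\<lambda>(p, v). \<alpha> (X i p v)) phi) \<and>
     \<comment> \<open>(CCX) (a)\<close>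
     (\<forall>i\<in>{1..N}. \<forall>tau\<in>allowed_tuples P d phi t. \<forall>(p, v)\<in>tau.
         \<alpha> (C i tau) \<longrightarrow> \<alpha> (C (i - 1) tau) \<or> \<alpha> (X i p v)) \<and>
     \<comment> \<open>(CCX) (b)\<close>
     (\<forall>tau\<in>allowed_tuples P d phi t. \<alpha> (C N tau)) \<and>
     \<comment> \<open>(CCX) (c)\<close>
     (\<forall>tau\<in>allowed_tuples P d phi t. \<alpha> (C N tau) \<longrightarrow> \<not> \<alpha> (C 0 tau)) \<and>
     \<comment> \<open>(BSU)\<close>
     (\<forall>i\<in>{lb + 2..N - 1}. \<alpha> (U (i + 1)) \<longrightarrow> \<alpha> (U i)) \<and>
     \<comment> \<open>(CCU)\<close>
     (\<forall>i\<in>{lb + 2..N}. \<forall>tau\<in>allowed_tuples P d phi t. \<not> \<alpha> (C (i - 1) tau) \<longrightarrow> \<alpha> (U i))"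

text \<open>Cost: total weight of falsified soft clauses (\<not> u_i, w_i), i.e. of the true u_i.\<close>
definition wpms_cost :: "(nat \<Rightarrow> nat) \<Rightarrow> nat \<Rightarrow> nat \<Rightarrow> (('p, 'v) wvar \<Rightarrow> bool) \<Rightarrow> nat" where
  "wpms_cost w N lb \<alpha> = (\<Sum>i\<in>{lb + 2..N}. if \<alpha> (U i) then w i else 0)"

text \<open>Optimal cost; the infimum over the empty set is \<infinity>.\<close>
definition wpms_opt :: "'p set \<Rightarrow> ('p \<Rightarrow> 'v set) \<Rightarrow> ('p \<times> 'v) pform \<Rightarrow> nat \<Rightarrow> nat \<Rightarrow> nat
    \<Rightarrow> (nat \<Rightarrow> nat) \<Rightarrow> enat" where
  "wpms_opt P d phi N t lb w =
     (INF \<alpha> \<in> {\<alpha>. wpms_hard P d phi N t lb \<alpha>}. enat (wpms_cost w N lb \<alpha>))"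

end

theory Submission
  imports Defs
begin

lemma peval_cong: "(\<forall>a\<in>patoms f. I a = J a) \<Longrightarrow> peval I f = peval J f"
  by (induction f) auto

lemma first_switch: "\<not> f (0::nat) \<Longrightarrow> f j \<Longrightarrow> \<exists>i. 1 \<le> i \<and> i \<le> j \<and> f i \<and> \<not> f (i - 1)"
proof (induction j)
  case 0 then show ?case by simp
next
  case (Suc j)
  show ?case
  proof (cases "f j")
    case True
    then show ?thesis using Suc by (meson le_SucI)
  next
    case False
    then show ?thesis using Suc by (intro exI[of _ "Suc j"]) auto
  qed
qed

lemma finite_allowed:
  assumes "sut_model P d phi"
  shows "finite (allowed_tuples P d phi t)"
proof -
  have "finite (Sigma P d)" using assms unfolding sut_model_def by (intro finite_SigmaI) auto
  moreover have "allowed_tuples P d phi t \<subseteq> Pow (Sigma P d)"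
    unfolding allowed_tuples_def t_tuple_def by auto
  ultimately show ?thesis by (meson finite_Pow_iff finite_subset)
qed

lemma ca_exists:
  assumes "sut_model P d phi"
  shows "\<exists>N xs. covering_array P d phi t N xs"
proof -
  obtain L where L: "set L = allowed_tuples P d phi t"
    using finite_allowed[OF assms] finite_list by blast
  define f where "f \<tau> = (SOME A. test_case P d phi A \<and> covers A \<tau>)" for \<tau>
  have f: "test_case P d phi (f \<tau>) \<and> covers (f \<tau>) \<tau>" if "\<tau> \<in> allowed_tuples P d phi t" for \<tau>
  proof -
    have "\<exists>A. test_case P d phi A \<and> covers A \<tau>" using that unfolding allowed_tuples_def by auto
    then show ?thesis unfolding f_def by (rule someI_ex)
  qed
  have "covering_array P d phi t (length (map f L)) (map f L)"
    unfolding covering_array_def using f L by auto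
  then show ?thesis by blast
qed

lemma CAN_le: "covering_array P d phi t j xs \<Longrightarrow> CAN P d phi t \<le> j"
  unfolding CAN_def by (rule Least_le) blast

lemma CAN_ex: "sut_model P d phi \<Longrightarrow> \<exists>xs. covering_array P d phi t (CAN P d phi t) xs"
  unfolding CAN_def by (rule LeastI_ex) (use ca_exists in blast)

lemma lower_lemma:
  assumes sm: "sut_model P d phi" and h: "wpms_hard P d phi N t lb \<alpha>" and jN: "j \<le> N"
    and cj: "\<forall>\<tau>\<in>allowed_tuples P d phi t. \<alpha> (C j \<tau>)"
  shows "CAN P d phi t \<le> j"
proof -
  define A where "A i p = (THE v. v \<in> d p \<and> \<alpha> (X i p v))" for i p
  have hX: "\<forall>i\<in>{1..N}. \<forall>p\<in>P. \<exists>!v. v \<in> d p \<and> \<alpha> (X i p v)" using h unfolding wpms_hard_def by blast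
  have hS: "\<forall>i\<in>{1..N}. peval (\<lambda>(p, v). \<alpha> (X i p v)) phi" using h unfolding wpms_hard_def by blast
  have hA: "\<forall>i\<in>{1..N}. \<forall>tau\<in>allowed_tuples P d phi t. \<forall>(p, v)\<in>tau.
         \<alpha> (C i tau) \<longrightarrow> \<alpha> (C (i - 1) tau) \<or> \<alpha> (X i p v)" using h unfolding wpms_hard_def by blast
  have hB: "\<forall>tau\<in>allowed_tuples P d phi t. \<alpha> (C N tau)" using h unfolding wpms_hard_def by blast
  have hC: "\<forall>tau\<in>allowed_tuples P d phi t. \<alpha> (C N tau) \<longrightarrow> \<not> \<alpha> (C 0 tau)" using h unfolding wpms_hard_def by blast
  have Aprop: "A i p \<in> d p \<and> \<alpha> (X i p (A i p))" if "i \<in> {1..N}" "p \<in> P" for i p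
    unfolding A_def using theI'[OF hX[rule_format, OF that]] by blast
  have Aeq: "\<alpha> (X i p v) \<longleftrightarrow> A i p = v" if "i \<in> {1..N}" "p \<in> P" "v \<in> d p" for i p v
    using Aprop[OF that(1,2)] hX[rule_format, OF that(1,2)] that(3) by blast
  have atoms: "patoms phi \<subseteq> Sigma P d" using sm unfolding sut_model_def by blast
  have tc: "test_case P d phi (A i)" if "i \<in> {1..N}" for i
  proof -
    have "peval (\<lambda>(p, v). \<alpha> (X i p v)) phi = peval (\<lambda>(p, v). A i p = v) phi"
      by (rule peval_cong) (use atoms Aeq[OF that] in auto)
    then show ?thesis unfolding test_case_def using hS that Aprop[OF that] by auto
  qed
  define xs where "xs = map A [1..<j+1]"
  have "covering_array P d phi t j xs"
    unfolding covering_array_def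
  proof (intro conjI ballI)
    show "length xs = j" unfolding xs_def by simp
  next
    fix B assume "B \<in> set xs"
    then show "test_case P d phi B" unfolding xs_def using tc jN by auto
  next
    fix \<tau> assume tau: "\<tau> \<in> allowed_tuples P d phi t"
    have "\<not> \<alpha> (C 0 \<tau>)" using hB hC tau by blast
    then obtain i where i: "1 \<le> i" "i \<le> j" "\<alpha> (C i \<tau>)" "\<not> \<alpha> (C (i - 1) \<tau>)"
      using first_switch[of "\<lambda>i. \<alpha> (C i \<tau>)" j] cj tau by blast
    have iN: "i \<in> {1..N}" using i jN by auto
    have sub: "\<tau> \<subseteq> Sigma P d" using tau unfolding allowed_tuples_def t_tuple_def by blast
    have "covers (A i) \<tau>" unfolding covers_def
    proof (clarify)
      fix p v assume pv: "(p, v) \<in> \<tau>"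
      then have "\<alpha> (X i p v)" using hA iN tau i by fastforce
      then show "A i p = v" using Aeq[OF iN] sub pv by blast
    qed
    moreover have "A i \<in> set xs" unfolding xs_def set_map set_upt using i by (intro imageI) simp
    ultimately show "\<exists>B\<in>set xs. covers B \<tau>" by blast
  qed
  then show ?thesis by (rule CAN_le)
qed


lemma main_lemma:
  assumes sm: "sut_model P d phi" and tc0: "test_case P d phi A0"
    and lbK: "lb < CAN P d phi t"
  shows "wpms_opt P d phi N t lb w =
     (if CAN P d phi t \<le> N then enat (\<Sum>i\<in>{lb + 2..CAN P d phi t}. w i) else \<infinity>)"
proof (cases "CAN P d phi t \<le> N")
  case False
  have "{\<alpha>. wpms_hard P d phi N t lb \<alpha>} = {}"
  proof (rule ccontr)
    assume "{\<alpha>. wpms_hard P d phi N t lb \<alpha>} \<noteq> {}"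
    then obtain \<alpha> where h: "wpms_hard P d phi N t lb \<alpha>" by blast
    have "\<forall>\<tau>\<in>allowed_tuples P d phi t. \<alpha> (C N \<tau>)" using h unfolding wpms_hard_def by blast
    from lower_lemma[OF sm h le_refl this] False show False by simp
  qed
  then show ?thesis using False unfolding wpms_opt_def by (metis INF_empty top_enat_def)
next
  case True
  define K where "K = CAN P d phi t"
  define S where "S = (\<Sum>i\<in>{lb + 2..K}. w i)"
  have KN: "K \<le> N" using True K_def by simp
  have lower: "S \<le> wpms_cost w N lb \<alpha>" if h: "wpms_hard P d phi N t lb \<alpha>" for \<alpha>
  proof (cases "lb + 2 \<le> K")
    case False
    then have "S = 0" unfolding S_def by simp
    then show ?thesis by simp
  next
    case True
    have hBSU: "\<forall>i\<in>{lb + 2..N - 1}. \<alpha> (U (i + 1)) \<longrightarrow> \<alpha> (U i)" using h unfolding wpms_hard_def by blast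
    have hCCU: "\<forall>i\<in>{lb + 2..N}. \<forall>tau\<in>allowed_tuples P d phi t. \<not> \<alpha> (C (i - 1) tau) \<longrightarrow> \<alpha> (U i)"
      using h unfolding wpms_hard_def by blast
    have uK: "\<alpha> (U K)"
    proof (rule ccontr)
      assume nu: "\<not> \<alpha> (U K)"
      have KI: "K \<in> {lb + 2..N}" using True KN by simp
      have "\<forall>\<tau>\<in>allowed_tuples P d phi t. \<alpha> (C (K - 1) \<tau>)"
        using hCCU[rule_format, OF KI] nu by blast
      from lower_lemma[OF sm h _ this] KN True show False unfolding K_def by arith
    qed
    have uk: "lb + 2 \<le> K - k \<longrightarrow> \<alpha> (U (K - k))" for k
    proof (induction k)
      case 0 then show ?case using uK by simp
    next
      case (Suc k)
      show ?case
      proof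
        assume a: "lb + 2 \<le> K - Suc k"
        then have "K - Suc k \<in> {lb + 2..N - 1}" "K - Suc k + 1 = K - k" using KN by auto
        then show "\<alpha> (U (K - Suc k))" using hBSU[rule_format, of "K - Suc k"] Suc a by simp
      qed
    qed
    have uall: "\<alpha> (U i)" if "i \<in> {lb + 2..K}" for i
      using uk[of "K - i"] that by auto
    have "S = (\<Sum>i\<in>{lb + 2..K}. if \<alpha> (U i) then w i else 0)"
      unfolding S_def using uall by (intro sum.cong) auto
    also have "\<dots> \<le> (\<Sum>i\<in>{lb + 2..N}. if \<alpha> (U i) then w i else 0)"
      by (rule sum_mono2) (use KN in auto)
    finally show ?thesis unfolding wpms_cost_def .
  qed
  obtain xs where xs: "covering_array P d phi t K xs" using CAN_ex[OF sm] K_def by blast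
  define R where "R i = (if 1 \<le> i \<and> i \<le> K then xs ! (i - 1) else A0)" for i
  have lenK: "length xs = K" using xs unfolding covering_array_def by blast
  have xstc: "\<forall>A\<in>set xs. test_case P d phi A" using xs unfolding covering_array_def by blast
  have xscov: "\<forall>tau\<in>allowed_tuples P d phi t. \<exists>A\<in>set xs. covers A tau"
    using xs unfolding covering_array_def by blast
  have Rtc: "test_case P d phi (R i)" for i
  proof (cases "1 \<le> i \<and> i \<le> K")
    case True
    then have "i - 1 < length xs" using lenK by auto
    then have "xs ! (i - 1) \<in> set xs" by (rule nth_mem)
    then show ?thesis using xstc True unfolding R_def by simp
  next
    case False
    then have "R i = A0" unfolding R_def by auto
    then show ?thesis using tc0 by simp
  qed
  define \<alpha>0 :: "('a, 'b) wvar \<Rightarrow> bool" where "\<alpha>0 x = (case x of X i p v \<Rightarrow> R i p = v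
      | C i \<tau> \<Rightarrow> (\<exists>j\<in>{1..i}. covers (R j) \<tau>) | U i \<Rightarrow> i \<le> K)" for x
  have aX: "\<alpha>0 (X i p v) = (R i p = v)" for i p v unfolding \<alpha>0_def by simp
  have aC: "\<alpha>0 (C i \<tau>) = (\<exists>j\<in>{1..i}. covers (R j) \<tau>)" for i \<tau> unfolding \<alpha>0_def by simp
  have aU: "\<alpha>0 (U i) = (i \<le> K)" for i unfolding \<alpha>0_def by simp
  have Cm: "\<alpha>0 (C m \<tau>)" if "\<tau> \<in> allowed_tuples P d phi t" "K \<le> m" for m \<tau>
  proof -
    have "\<exists>A\<in>set xs. covers A \<tau>" by (rule bspec[OF xscov that(1)])
    then obtain B where B: "B \<in> set xs" "covers B \<tau>" by (rule bexE)
    obtain k where k0: "k < length xs" "xs ! k = B" using B(1) by (auto simp: in_set_conv_nth)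
    have k: "k < K" using k0(1) lenK by simp
    have RB: "R (k + 1) = B" unfolding R_def using k k0(2) by simp
    have km: "k + 1 \<in> {1..m}" using k that(2) by simp
    have "covers (R (k + 1)) \<tau>" using RB B(2) by simp
    then show ?thesis unfolding aC by (rule bexI[OF _ km])
  qed
  have h1: "\<forall>i\<in>{1..N}. \<forall>p\<in>P. \<exists>!v. v \<in> d p \<and> \<alpha>0 (X i p v)"
  proof (intro ballI)
    fix i p assume "i \<in> {1..N}" "p \<in> P"
    have "R i p \<in> d p" using Rtc[of i] \<open>p \<in> P\<close> unfolding test_case_def by blast
    then show "\<exists>!v. v \<in> d p \<and> \<alpha>0 (X i p v)" by (intro ex1I[of _ "R i p"]) (auto simp: aX)
  qed
  have h2: "\<forall>i\<in>{1..N}. peval (\<lambda>(p, v). \<alpha>0 (X i p v)) phi"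
  proof (intro ballI)
    fix i assume "i \<in> {1..N}"
    show "peval (\<lambda>(p, v). \<alpha>0 (X i p v)) phi" using Rtc[of i] unfolding aX test_case_def by simp
  qed
  have h3: "\<forall>i\<in>{1..N}. \<forall>tau\<in>allowed_tuples P d phi t. \<forall>(p, v)\<in>tau.
         \<alpha>0 (C i tau) \<longrightarrow> \<alpha>0 (C (i - 1) tau) \<or> \<alpha>0 (X i p v)"
  proof (rule ballI, rule ballI)
    fix i \<tau> assume i: "i \<in> {1..N}" and tau: "\<tau> \<in> allowed_tuples P d phi t"
    show "\<forall>(p, v)\<in>\<tau>. \<alpha>0 (C i \<tau>) \<longrightarrow> \<alpha>0 (C (i - 1) \<tau>) \<or> \<alpha>0 (X i p v)"
    proof -
      have key: "\<alpha>0 (X i p v)" if pv: "(p, v) \<in> \<tau>" and c: "\<alpha>0 (C i \<tau>)" and nc: "\<not> \<alpha>0 (C (i - 1) \<tau>)" for p v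
      proof -
        from c obtain j where j: "j \<in> {1..i}" "covers (R j) \<tau>" unfolding aC by blast
        have "j = i" using nc j unfolding aC by (cases "j = i") auto
        then show "\<alpha>0 (X i p v)" using j pv unfolding aX covers_def by auto
      qed
      then show ?thesis by blast
    qed
  qed
  have h4: "\<forall>tau\<in>allowed_tuples P d phi t. \<alpha>0 (C N tau)"
    using Cm KN by blast
  have h5: "\<forall>tau\<in>allowed_tuples P d phi t. \<alpha>0 (C N tau) \<longrightarrow> \<not> \<alpha>0 (C 0 tau)"
    unfolding aC by simp
  have h6: "\<forall>i\<in>{lb + 2..N - 1}. \<alpha>0 (U (i + 1)) \<longrightarrow> \<alpha>0 (U i)"
    unfolding aU by simp
  have h7: "\<forall>i\<in>{lb + 2..N}. \<forall>tau\<in>allowed_tuples P d phi t. \<not> \<alpha>0 (C (i - 1) tau) \<longrightarrow> \<alpha>0 (U i)"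
  proof (intro ballI impI)
    fix i \<tau> assume i: "i \<in> {lb + 2..N}" and tau: "\<tau> \<in> allowed_tuples P d phi t"
      and nc: "\<not> \<alpha>0 (C (i - 1) \<tau>)"
    show "\<alpha>0 (U i)"
    proof (rule ccontr)
      assume "\<not> \<alpha>0 (U i)"
      then have "K \<le> i - 1" unfolding aU by simp
      then show False using Cm[OF tau] nc by blast
    qed
  qed
  have hard: "wpms_hard P d phi N t lb \<alpha>0"
    unfolding wpms_hard_def using h1 h2 h3 h4 h5 h6 h7 by (intro conjI)
  have cost: "wpms_cost w N lb \<alpha>0 = S"
  proof -
    have "wpms_cost w N lb \<alpha>0 = (\<Sum>i\<in>{lb + 2..N}. if i \<in> {..K} then w i else 0)"
      unfolding wpms_cost_def aU by simp
    also have "\<dots> = (\<Sum>i\<in>{lb + 2..N} \<inter> {..K}. w i)" by (rule sum.inter_restrict[symmetric]) simp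
    also have "{lb + 2..N} \<inter> {..K} = {lb + 2..K}" using KN by auto
    finally show ?thesis unfolding S_def .
  qed
  have "wpms_opt P d phi N t lb w = enat S"
    unfolding wpms_opt_def
  proof (rule antisym)
    show "(INF \<alpha>\<in>{\<alpha>. wpms_hard P d phi N t lb \<alpha>}. enat (wpms_cost w N lb \<alpha>)) \<le> enat S"
    proof -
      have "(INF \<alpha>\<in>{\<alpha>. wpms_hard P d phi N t lb \<alpha>}. enat (wpms_cost w N lb \<alpha>)) \<le> enat (wpms_cost w N lb \<alpha>0)"
        by (rule INF_lower) (simp add: hard)
      then show ?thesis using cost by simp
    qed
    show "enat S \<le> (INF \<alpha>\<in>{\<alpha>. wpms_hard P d phi N t lb \<alpha>}. enat (wpms_cost w N lb \<alpha>))"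
      using lower by (intro INF_greatest) auto
  qed
  then show ?thesis using True unfolding S_def K_def by simp
qed

lemma sum_pow2: "(\<Sum>i\<in>{lb + 2..lb + 1 + n}. (2::nat) ^ (i - (lb + 2))) = 2 ^ n - 1"
proof (induction n)
  case 0 then show ?case by simp
next
  case (Suc n)
  have "{lb + 2..lb + 1 + Suc n} = insert (lb + 2 + n) {lb + 2..lb + 1 + n}" by auto
  then have "(\<Sum>i\<in>{lb + 2..lb + 1 + Suc n}. (2::nat) ^ (i - (lb + 2)))
     = 2 ^ n + (\<Sum>i\<in>{lb + 2..lb + 1 + n}. (2::nat) ^ (i - (lb + 2)))" by simp
  also have "\<dots> = 2 ^ n + (2 ^ n - 1)" using Suc by simp
  also have "\<dots> = 2 ^ Suc n - 1" using one_le_power[of 2 n] by simp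
  finally show ?case .
qed

lemma sum_lin: "(\<Sum>i\<in>{lb + 2..lb + 1 + n}. i - (lb + 2) + 1) = (1 + n) * n div (2::nat)"
proof (induction n)
  case 0 then show ?case by simp
next
  case (Suc n)
  have "{lb + 2..lb + 1 + Suc n} = insert (lb + 2 + n) {lb + 2..lb + 1 + n}" by auto
  then have "(\<Sum>i\<in>{lb + 2..lb + 1 + Suc n}. i - (lb + 2) + 1)
     = (n + 1) + (\<Sum>i\<in>{lb + 2..lb + 1 + n}. i - (lb + 2) + 1)" by simp
  also have "\<dots> = (n + 1) + (1 + n) * n div 2" using Suc by simp
  also have "\<dots> = (1 + Suc n) * Suc n div 2" by simp
  finally show ?case .
qed

theorem proposition5:
  fixes P :: "'p set" and d :: "'p \<Rightarrow> 'v set" and phi :: "('p \<times> 'v) pform"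
    and t N lb :: nat
  assumes "sut_model P d phi"
    and "\<exists>A. test_case P d phi A"
    and "1 \<le> t" and "t \<le> card P"
    and "1 \<le> N"
    and "lb < CAN P d phi t"
  shows "wpms_opt P d phi N t lb (\<lambda>i. 2 ^ (i - (lb + 2))) =
           (if CAN P d phi t \<le> N then enat (2 ^ (CAN P d phi t - (lb + 1)) - 1) else \<infinity>)
    \<and> wpms_opt P d phi N t lb (\<lambda>i. i - (lb + 2) + 1) =
           (let n = CAN P d phi t - (lb + 1) in
              if CAN P d phi t \<le> N then enat ((1 + n) * n div 2) else \<infinity>)"
proof -
  obtain A0 where A0: "test_case P d phi A0" using assms(2) by blast
  define n where "n = CAN P d phi t - (lb + 1)"
  have K: "CAN P d phi t = lb + 1 + n" using assms(6) n_def by simp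
  show ?thesis
    unfolding main_lemma[OF assms(1) A0 assms(6)] Let_def n_def[symmetric]
    unfolding K sum_pow2 sum_lin by simp
qed

end
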